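(* Let $k$ be a positive integer and let $a_1,\dots,a_k$ and $b_1,\dots,b_k$ be real numbers in $[a,b]$ such that $\sum_{i=1}^k a_i^j=\sum_{i=1}^k b_i^j$ for all integers $1\le j<k$. Then the following are equivalent: (1) $\sum_{i=1}^k a_i^k\ge\sum_{i=1}^k b_i^k$; (2) $\max_i a_i\ge\max_i b_i$; (3) $\sum_{i=1}^k f(a_i)\ge\sum_{i=1}^k f(b_i)$ for every $k$ times differentiable $f:[a,b]\to\mathbb{R}$ with $f^{(k)}\ge 0$. *)

theory Defs
  imports Complex_Main
begin

definition kdiff_nonneg_on :: "nat \<Rightarrow> real \<Rightarrow> real \<Rightarrow> (real \<Rightarrow> real) \<Rightarrow> bool" where
  "kdiff_nonneg_on k a b f \<longleftrightarrow>
     (\<exists>D :: nat \<Rightarrow> real \<Rightarrow> real.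
        D 0 = f \<and>
        (\<forall>m<k. \<forall>t\<in>{a..b}. (D m has_real_derivative D (Suc m) t) (at t within {a..b})) \<and>
        (\<forall>t\<in>{a..b}. D k t \<ge> 0))"

end

theory Submission
  imports Defs "HOL-Computational_Algebra.Polynomial"
begin


abbreviation lin :: "real \<Rightarrow> real poly" where "lin z \<equiv> [:-z, 1:]"

lemma pderiv_funpow_lin:
  "(pderiv^^s) (p + smult c q) = (pderiv^^s) p + smult c ((pderiv^^s) q)"
  by (induction s) (auto simp: pderiv_add pderiv_smult)

lemma coeff_pderiv_funpow:
  "coeff ((pderiv^^m) p) j = pochhammer (of_nat (j+1)) m * coeff p (j+m)"
proof (induction m arbitrary: j)
  case 0 then show ?case by simp
next
  case (Suc m)
  have "coeff ((pderiv^^Suc m) p) j = of_nat (Suc j) * coeff ((pderiv^^m) p) (Suc j)"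
    by (simp add: coeff_pderiv)
  also have "\<dots> = of_nat (Suc j) * (pochhammer (of_nat (Suc j + 1)) m * coeff p (Suc j + m))"
    using Suc by simp
  also have "\<dots> = pochhammer (of_nat (j+1)) (Suc m) * coeff p (j + Suc m)"
    by (simp add: pochhammer_rec algebra_simps)
  finally show ?case .
qed

lemma pderiv_funpow_top:
  assumes "\<forall>j>k. coeff q j = 0"
  shows "poly ((pderiv^^k) q) t = fact k * coeff q k"
proof -
  let ?r = "(pderiv^^k) q"
  have "\<forall>i>0. coeff ?r i = 0" using assms by (simp add: coeff_pderiv_funpow)
  then have "degree ?r \<le> 0" by (intro degree_le) simp
  then have "?r = [:coeff ?r 0:]" using degree_0_id by (metis le_zero_eq)
  then have "poly ?r t = coeff ?r 0" by (metis poly_pCons poly_0 add_0_right mult_zero_right)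
  also have "\<dots> = fact k * coeff q k" by (simp add: coeff_pderiv_funpow pochhammer_fact)
  finally show ?thesis .
qed

lemma pderiv_funpow_zero:
  assumes "\<forall>j\<ge>k. coeff p j = 0"
  shows "(pderiv^^k) p = 0"
  by (rule poly_eqI) (simp add: coeff_pderiv_funpow assms)

lemma pd_aux:
  fixes l u :: "real poly"
  assumes "pderiv l = 1"
  shows "pderiv (l ^ Suc m * u) = l ^ m * (smult (of_nat (Suc m)) u + l * pderiv u)"
proof -
  have a: "pderiv (l ^ Suc m) = smult (of_nat (Suc m)) (l^m)"
    using pderiv_power_Suc[of l m] assms by simp
  have "pderiv (l ^ Suc m * u) = l ^ Suc m * pderiv u + u * pderiv (l ^ Suc m)"
    by (rule pderiv_mult)
  also have "\<dots> = l ^ m * (smult (of_nat (Suc m)) u + l * pderiv u)"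
    unfolding a by (simp add: algebra_simps)
  finally show ?thesis .
qed

lemma E1: "s < m \<Longrightarrow> poly ((pderiv^^s) (lin v ^ m * u)) v = 0"
proof (induction s arbitrary: m u)
  case 0 then show ?case by (simp add: poly_power)
next
  case (Suc s)
  then obtain m' where m: "m = Suc m'" by (cases m) auto
  have d: "pderiv (lin v ^ m * u) = lin v ^ m' * (smult (of_nat m) u + lin v * pderiv u)"
    unfolding m by (rule pd_aux) (simp add: pderiv_pCons)
  have "(pderiv^^Suc s) (lin v ^ m * u) = (pderiv^^s) (pderiv (lin v ^ m * u))"
    by (simp only: funpow_Suc_right comp_def)
  then show ?case using Suc m d by simp
qed

lemma E2: "poly ((pderiv^^m) (lin v ^ m * u)) v = fact m * poly u v"
proof (induction m arbitrary: u)
  case 0 then show ?case by simp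
next
  case (Suc m)
  have d: "pderiv (lin v ^ Suc m * u) = lin v ^ m * (smult (of_nat (Suc m)) u + lin v * pderiv u)"
    by (rule pd_aux) (simp add: pderiv_pCons)
  have "(pderiv^^Suc m) (lin v ^ Suc m * u) = (pderiv^^m) (pderiv (lin v ^ Suc m * u))"
    by (simp only: funpow_Suc_right comp_def)
  then have "poly ((pderiv^^Suc m) (lin v ^ Suc m * u)) v
      = poly ((pderiv^^m) (lin v ^ m * (smult (of_nat (Suc m)) u + lin v * pderiv u))) v"
    using d by simp
  also have "\<dots> = fact m * poly (smult (of_nat (Suc m)) u + lin v * pderiv u) v"
    by (rule Suc.IH)
  also have "\<dots> = fact (Suc m) * poly u v" by simp
  finally show ?case .
qed

lemma factor_list:
  "prod_list (map lin ys) = lin v ^ count_list ys v * prod_list (map lin (filter (\<lambda>z. z \<noteq> v) ys))"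
  by (induction ys) (auto simp: algebra_simps)

lemma poly_filter_nz: "poly (prod_list (map lin (filter (\<lambda>z. z \<noteq> v) ys))) v \<noteq> 0"
  by (induction ys) auto

lemma deg_list: "degree (prod_list (map lin ys)) = length ys \<and> coeff (prod_list (map lin ys)) (length ys) = 1"
proof (induction ys)
  case Nil then show ?case by simp
next
  case (Cons z ys)
  let ?q = "prod_list (map lin ys)"
  have nz: "?q \<noteq> 0" using Cons by auto
  have "degree (lin z * ?q) = Suc (length ys)" using Cons nz by (subst degree_mult_eq) auto
  moreover have "lead_coeff (lin z * ?q) = 1" using Cons by (subst lead_coeff_mult) simp
  ultimately show ?case by simp
qed

lemma coeff_list_zero: "j > length ys \<Longrightarrow> coeff (prod_list (map lin ys)) j = 0"
  using deg_list[of ys] by (simp add: coeff_eq_0)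

definition interp :: "(nat \<Rightarrow> real \<Rightarrow> real) \<Rightarrow> real list \<Rightarrow> real poly \<Rightarrow> bool" where
  "interp D ys p \<longleftrightarrow> (\<forall>v s. s < count_list ys v \<longrightarrow> poly ((pderiv^^s) p) v = D s v)"

lemma hermite_exists: "\<exists>p. interp D ys p \<and> (\<forall>j\<ge>length ys. coeff p j = 0)"
proof (induction ys)
  case Nil then show ?case by (auto simp: interp_def intro: exI[of _ 0])
next
  case (Cons w ys)
  then obtain p where ip: "interp D ys p" and cp: "\<forall>j\<ge>length ys. coeff p j = 0" by blast
  define \<omega> where "\<omega> = prod_list (map lin ys)"
  define m where "m = count_list ys w"
  define u where "u = prod_list (map lin (filter (\<lambda>z. z \<noteq> w) ys))"
  have om: "\<omega> = lin w ^ m * u" unfolding \<omega>_def m_def u_def by (rule factor_list)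
  have un: "poly u w \<noteq> 0" unfolding u_def by (rule poly_filter_nz)
  define c where "c = (D m w - poly ((pderiv^^m) p) w) / (fact m * poly u w)"
  define p' where "p' = p + smult c \<omega>"
  have "interp D (w # ys) p'"
    unfolding interp_def
  proof (intro allI impI)
    fix v s assume s: "s < count_list (w # ys) v"
    have ev: "poly ((pderiv^^s) p') v = poly ((pderiv^^s) p) v + c * poly ((pderiv^^s) \<omega>) v"
      unfolding p'_def pderiv_funpow_lin by simp
    show "poly ((pderiv^^s) p') v = D s v"
    proof (cases "s < count_list ys v")
      case True
      have "poly ((pderiv^^s) \<omega>) v = 0"
        unfolding \<omega>_def factor_list[of ys v] using True by (rule E1)
      then show ?thesis using ev ip True by (simp add: interp_def)
    next
      case False
      then have vw: "v = w" and sm: "s = m" using s by (auto simp: m_def split: if_splits)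
      have "poly ((pderiv^^s) \<omega>) v = fact m * poly u w" using om vw sm E2 by simp
      then show ?thesis using ev vw sm un by (simp add: c_def)
    qed
  qed
  moreover have "\<forall>j\<ge>length (w # ys). coeff p' j = 0"
    using cp coeff_list_zero[of ys] by (simp add: p'_def \<omega>_def)
  ultimately show ?case by blast
qed



definition chain :: "(nat \<Rightarrow> real \<Rightarrow> real) \<Rightarrow> nat \<Rightarrow> real \<Rightarrow> real \<Rightarrow> bool" where
  "chain D n a b \<longleftrightarrow> (\<forall>m<n. \<forall>t\<in>{a..b}. (D m has_real_derivative D (Suc m) t) (at t within {a..b}))"

lemma mono_idx:
  fixes s :: "nat \<Rightarrow> real"
  assumes "\<forall>i<n. s i \<le> s (Suc i)" "i \<le> j" "j \<le> n"
  shows "s i \<le> s j"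
  using assms(2,3)
proof (induction j)
  case 0 then show ?case by simp
next
  case (Suc j)
  show ?case
  proof (cases "i = Suc j")
    case True then show ?thesis by simp
  next
    case False
    then have "s i \<le> s j" using Suc by simp
    also have "s j \<le> s (Suc j)" using assms(1) Suc by simp
    finally show ?thesis .
  qed
qed

lemma rolle_step:
  fixes f :: "real \<Rightarrow> real"
  assumes ch: "\<forall>t\<in>{a..b}. (f has_real_derivative f' t) (at t within {a..b})"
    and u: "a \<le> u" "u < v" "v \<le> b" and fu: "f u = 0" and fv: "f v = 0"
  shows "\<exists>z. u < z \<and> z < v \<and> f' z = 0"
proof -
  have "continuous_on {a..b} f" by (rule DERIV_continuous_on) (use ch in blast)
  then have c: "continuous_on {u..v} f" by (rule continuous_on_subset) (use u in auto)
  have dif: "\<And>z. u < z \<Longrightarrow> z < v \<Longrightarrow> (f has_real_derivative f' z) (at z)"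
  proof -
    fix z assume z: "u < z" "z < v"
    then have "at z within {a..b} = at z" using u by (intro at_within_Icc_at) auto
    then show "(f has_real_derivative f' z) (at z)" using ch z u by (metis atLeastAtMost_iff less_imp_le order.trans)
  qed
  obtain z where z: "u < z" "z < v" "DERIV f z :> 0"
    using Rolle[of u v f] u fu fv c dif by (metis real_differentiable_def)
  then have "f' z = 0" using dif[of z] DERIV_unique by blast
  then show ?thesis using z by blast
qed

lemma rolle_mult:
  "chain D n a b \<Longrightarrow> (\<forall>i\<le>n. s i \<in> {a..b}) \<Longrightarrow> (\<forall>i<n. s i \<le> s (Suc i)) \<Longrightarrow>
   (\<forall>i\<le>n. D (card {j. j < i \<and> s j = s i}) (s i) = 0) \<Longrightarrow> \<exists>\<xi>\<in>{a..b}. D n \<xi> = 0"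
proof (induction n arbitrary: D s)
  case 0 then show ?case by auto
next
  case (Suc n)
  note ch = Suc.prems(1) and sab = Suc.prems(2) and mono = Suc.prems(3) and z = Suc.prems(4)
  have mono': "\<And>i j. i \<le> j \<Longrightarrow> j \<le> Suc n \<Longrightarrow> s i \<le> s j"
    using mono_idx[OF mono] by blast
  have z0: "D 0 (s i) = 0" if "i \<le> Suc n" for i
  proof -
    define j0 where "j0 = (LEAST j. s j = s i)"
    have "s j0 = s i" unfolding j0_def by (rule LeastI) simp
    moreover have "j0 \<le> i" unfolding j0_def by (rule Least_le) simp
    moreover have e: "{j. j < j0 \<and> s j = s j0} = {}"
    proof -
      { fix j assume "j < j0" then have "s j \<noteq> s i" unfolding j0_def by (rule not_less_Least) }
      then show ?thesis using \<open>s j0 = s i\<close> by auto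
    qed
    moreover have "j0 \<le> Suc n" using \<open>j0 \<le> i\<close> that by simp
    ultimately have c0: "card {j. j < j0 \<and> s j = s j0} = 0" "j0 \<le> Suc n" by simp_all
    have "D (card {j. j < j0 \<and> s j = s j0}) (s j0) = 0" using z c0(2) by blast
    then have "D 0 (s j0) = 0" by (simp only: c0(1))
    then show ?thesis using \<open>s j0 = s i\<close> by simp
  qed
  have d0: "\<forall>t\<in>{a..b}. (D 0 has_real_derivative D 1 t) (at t within {a..b})"
    using ch by (simp add: chain_def)
  have ex: "\<exists>\<xi>. s i < \<xi> \<and> \<xi> < s (Suc i) \<and> D 1 \<xi> = 0"
    if "i \<le> n" "s i \<noteq> s (Suc i)" for i
  proof -
    have "s i \<le> s (Suc i)" using mono that by simp
    then have "s i < s (Suc i)" using that by simp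
    moreover have "a \<le> s i" "s (Suc i) \<le> b" using sab that by auto
    ultimately show ?thesis using rolle_step[OF d0, of "s i" "s (Suc i)"] z0 that by simp
  qed
  define t where "t i = (if s i = s (Suc i) then s i else SOME \<xi>. s i < \<xi> \<and> \<xi> < s (Suc i) \<and> D 1 \<xi> = 0)" for i
  have tp: "s i < t i \<and> t i < s (Suc i) \<and> D 1 (t i) = 0" if "i \<le> n" "s i \<noteq> s (Suc i)" for i
  proof -
    have "t i = (SOME \<xi>. s i < \<xi> \<and> \<xi> < s (Suc i) \<and> D 1 \<xi> = 0)" using that(2) by (simp add: t_def)
    then show ?thesis using someI_ex[OF ex[OF that]] by simp
  qed
  have t_lo: "s i \<le> t i" and t_hi: "t i \<le> s (Suc i)" if "i \<le> n" for i
  proof -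
    have "s i \<le> t i \<and> t i \<le> s (Suc i)"
    proof (cases "s i = s (Suc i)")
      case True then show ?thesis by (simp add: t_def)
    next
      case False then show ?thesis using tp[OF that False] by simp
    qed
    then show "s i \<le> t i" "t i \<le> s (Suc i)" by auto
  qed
  have ch': "chain (\<lambda>m. D (Suc m)) n a b" using ch by (simp add: chain_def)
  have tab: "\<forall>i\<le>n. t i \<in> {a..b}"
  proof (intro allI impI)
    fix i assume "i \<le> n"
    then have "a \<le> s i" "s (Suc i) \<le> b" using sab by auto
    then show "t i \<in> {a..b}" using t_lo[of i] t_hi[of i] \<open>i \<le> n\<close> by simp
  qed
  have tmono: "\<forall>i<n. t i \<le> t (Suc i)"
  proof (intro allI impI)
    fix i assume "i < n"
    then show "t i \<le> t (Suc i)" using t_lo[of "Suc i"] t_hi[of i] by simp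
  qed
  have tz: "\<forall>i\<le>n. D (Suc (card {j. j < i \<and> t j = t i})) (t i) = 0"
  proof (intro allI impI)
    fix i assume i: "i \<le> n"
    show "D (Suc (card {j. j < i \<and> t j = t i})) (t i) = 0"
    proof (cases "s i = s (Suc i)")
      case True
      have ti: "t i = s i" using True by (simp add: t_def)
      have eq: "{j. j < i \<and> t j = t i} = {j. j < i \<and> s j = s i}"
      proof (intro set_eqI iffI; clarsimp)
        fix j assume j: "j < i" "t j = t i"
        show "s j = s i"
        proof (cases "s j = s (Suc j)")
          case True then show ?thesis using j ti by (simp add: t_def)
        next
          case False
          then have "t j < s (Suc j)" using tp[of j] j i by simp
          moreover have "s (Suc j) \<le> s i" using mono' j i by simp
          ultimately show ?thesis using j ti by simp
        qed
      next
        fix j assume j: "j < i" "s j = s i"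
        have "s (Suc j) \<le> s i" using mono' j(1) i by simp
        moreover have "s j \<le> s (Suc j)" using mono j(1) i by simp
        ultimately have "s j = s (Suc j)" using j by simp
        then show "t j = t i" using j ti by (simp add: t_def)
      qed
      have eq2: "{j. j < Suc i \<and> s j = s (Suc i)} = insert i {j. j < i \<and> s j = s i}"
        using True by auto
      have "card {j. j < Suc i \<and> s j = s (Suc i)} = Suc (card {j. j < i \<and> s j = s i})"
        unfolding eq2 by simp
      then show ?thesis using z[rule_format, of "Suc i"] i eq ti True by simp
    next
      case False
      have eq: "{j. j < i \<and> t j = t i} = {}"
      proof -
        have "t j < t i" if "j < i" for j
        proof -
          have "t j \<le> s (Suc j)" using t_hi that i by simp
          also have "s (Suc j) \<le> s i" using mono' that i by simp
          also have "s i < t i" using tp[OF i False] by simp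
          finally show ?thesis .
        qed
        then show ?thesis by (auto simp: less_le)
      qed
      then have "card {j. j < i \<and> t j = t i} = 0" by (simp only: card.empty)
      then have "card {j. j < i \<and> t j = t i} = 0" by (simp only: card.empty)
      then show ?thesis using tp[OF i False] by (simp only:) simp
    qed
  qed
  have "\<exists>\<xi>\<in>{a..b}. (\<lambda>m. D (Suc m)) n \<xi> = 0"
    by (rule Suc.IH[OF ch' tab tmono]) (use tz in simp)
  then show ?case by simp
qed

lemma rolle_list:
  assumes "chain D n a b" "sorted zs" "length zs = Suc n" "set zs \<subseteq> {a..b}"
    and "\<forall>v s. s < count_list zs v \<longrightarrow> D s v = 0"
  shows "\<exists>\<xi>\<in>{a..b}. D n \<xi> = 0"
proof (rule rolle_mult[OF assms(1), of "\<lambda>i. zs ! i"])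
  show "\<forall>i\<le>n. zs ! i \<in> {a..b}"
  proof (intro allI impI)
    fix i assume "i \<le> n"
    then have "zs ! i \<in> set zs" using assms(3) by simp
    then show "zs ! i \<in> {a..b}" using assms(4) by blast
  qed
  show "\<forall>i<n. zs ! i \<le> zs ! Suc i" using assms(2,3) by (simp add: sorted_iff_nth_mono)
  show "\<forall>i\<le>n. D (card {j. j < i \<and> zs ! j = zs ! i}) (zs ! i) = 0"
  proof (intro allI impI)
    fix i assume i: "i \<le> n"
    have "{j. j < i \<and> zs ! j = zs ! i} \<subset> {j. j < length zs \<and> zs ! i = zs ! j}"
    proof (rule psubsetI)
      show "{j. j < i \<and> zs ! j = zs ! i} \<subseteq> {j. j < length zs \<and> zs ! i = zs ! j}"
      proof (rule subsetI)
        fix j assume "j \<in> {j. j < i \<and> zs ! j = zs ! i}"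
        then have "j < i" "zs ! j = zs ! i" by auto
        then show "j \<in> {j. j < length zs \<and> zs ! i = zs ! j}" using i assms(3) by simp
      qed
      have "i \<in> {j. j < length zs \<and> zs ! i = zs ! j}" using i assms(3) by simp
      moreover have "i \<notin> {j. j < i \<and> zs ! j = zs ! i}" by simp
      ultimately show "{j. j < i \<and> zs ! j = zs ! i} \<noteq> {j. j < length zs \<and> zs ! i = zs ! j}" by blast
    qed
    then have "card {j. j < i \<and> zs ! j = zs ! i} < card {j. j < length zs \<and> zs ! i = zs ! j}"
      by (rule psubset_card_mono[rotated]) simp
    also have "\<dots> = count_list zs (zs ! i)"
      by (simp add: count_list_eq_length_filter length_filter_conv_card)
    finally show "D (card {j. j < i \<and> zs ! j = zs ! i}) (zs ! i) = 0" using assms(5) by blast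
  qed
qed



lemma poly_chain: "chain (\<lambda>m t. poly ((pderiv^^m) q) t) n a b"
  unfolding chain_def
proof (intro allI impI ballI)
  fix m t assume "m < n" "t \<in> {a..b}"
  have "((\<lambda>t. poly ((pderiv^^m) q) t) has_real_derivative poly (pderiv ((pderiv^^m) q)) t) (at t)"
    by (rule poly_DERIV)
  then show "((\<lambda>t. poly ((pderiv^^m) q) t) has_real_derivative poly ((pderiv^^Suc m) q) t) (at t within {a..b})"
    by (simp add: has_field_derivative_at_within)
qed

lemma count_list_sort: "count_list (sort xs) v = count_list xs v"
  by (simp add: count_list_eq_length_filter filter_sort)

lemma poly_Q_nz: "t \<notin> set ys \<Longrightarrow> poly (prod_list (map lin ys)) t \<noteq> 0"
  using factor_list[of ys t] poly_filter_nz[of t ys] by (simp add: count_list_0_iff)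

lemma key_nonneg:
  assumes ch: "chain D k a b" and pos: "\<forall>t\<in>{a..b}. D k t \<ge> 0"
    and len: "length ys = k" and ysab: "set ys \<subseteq> {a..b}"
    and ip: "interp D ys p" and cp: "\<forall>j\<ge>k. coeff p j = 0"
    and t: "t \<in> {a..b}" and Qt: "poly (prod_list (map lin ys)) t \<ge> 0"
  shows "D 0 t - poly p t \<ge> 0"
proof (cases "t \<in> set ys")
  case True
  then have "0 < count_list ys t" using count_list_0_iff[of ys t] by simp
  then have "poly ((pderiv^^0) p) t = D 0 t" using ip unfolding interp_def by blast
  then show ?thesis by simp
next
  case False
  define Q where "Q = prod_list (map lin ys)"
  have Qnz: "poly Q t \<noteq> 0" unfolding Q_def by (rule poly_Q_nz[OF False])
  then have Qpos: "poly Q t > 0" using Qt Q_def by simp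
  show ?thesis
  proof (rule ccontr)
    assume "\<not> ?thesis"
    then have hneg: "D 0 t - poly p t < 0" by simp
    define l where "l = (D 0 t - poly p t) / poly Q t"
    have lneg: "l < 0" unfolding l_def using hneg Qpos by (simp add: divide_neg_pos)
    define E where "E = (\<lambda>m \<tau>. D m \<tau> - poly ((pderiv^^m) p) \<tau> - l * poly ((pderiv^^m) Q) \<tau>)"
    have chE: "chain E k a b"
      unfolding chain_def
    proof (intro allI impI ballI)
      fix m \<tau> assume m: "m < k" and tau: "\<tau> \<in> {a..b}"
      have d1: "(D m has_real_derivative D (Suc m) \<tau>) (at \<tau> within {a..b})"
        using ch m tau by (simp add: chain_def)
      have d2: "((\<lambda>t. poly ((pderiv^^m) p) t) has_real_derivative poly ((pderiv^^Suc m) p) \<tau>) (at \<tau> within {a..b})"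
        using poly_chain[of p k a b] m tau by (simp add: chain_def)
      have d3: "((\<lambda>t. poly ((pderiv^^m) Q) t) has_real_derivative poly ((pderiv^^Suc m) Q) \<tau>) (at \<tau> within {a..b})"
        using poly_chain[of Q k a b] m tau by (simp add: chain_def)
      have "((\<lambda>t. D m t - poly ((pderiv^^m) p) t - l * poly ((pderiv^^m) Q) t) has_real_derivative
          D (Suc m) \<tau> - poly ((pderiv^^Suc m) p) \<tau> - l * poly ((pderiv^^Suc m) Q) \<tau>) (at \<tau> within {a..b})"
        by (intro DERIV_diff DERIV_cmult d1 d2 d3)
      then show "(E m has_real_derivative E (Suc m) \<tau>) (at \<tau> within {a..b})"
        unfolding E_def by simp
    qed
    define zs where "zs = sort (t # ys)"
    have zs: "sorted zs" "length zs = Suc k" "set zs \<subseteq> {a..b}"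
    proof -
    show "sorted zs" by (simp only: zs_def sorted_sort)
    show "length zs = Suc k" using len by (simp only: zs_def length_sort) simp
    show "set zs \<subseteq> {a..b}" using ysab t by (simp only: zs_def set_sort) auto
  qed
    have zz: "\<forall>v s. s < count_list zs v \<longrightarrow> E s v = 0"
    proof (intro allI impI)
      fix v s assume s: "s < count_list zs v"
      then have s': "s < count_list (t # ys) v" by (simp only: zs_def count_list_sort)
      show "E s v = 0"
      proof (cases "v = t")
        case True
        then have "s = 0" using s' False count_list_0_iff[of ys t] by simp
        then show ?thesis using True Qnz by (simp add: E_def l_def)
      next
        case vt: False
        then have sc: "s < count_list ys v" using s' by simp
        then have "poly ((pderiv^^s) p) v = D s v" using ip by (simp add: interp_def)
        moreover have "poly ((pderiv^^s) Q) v = 0"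
          unfolding Q_def factor_list[of ys v] using sc by (rule E1)
        ultimately show ?thesis by (simp add: E_def)
      qed
    qed
    obtain \<xi> where xi: "\<xi> \<in> {a..b}" "E k \<xi> = 0" using rolle_list[OF chE zs zz] by blast
    have "(pderiv^^k) p = 0" by (rule pderiv_funpow_zero) (use cp in simp)
    moreover have "poly ((pderiv^^k) Q) \<xi> = fact k"
    proof -
      have "\<forall>j>k. coeff Q j = 0" using coeff_list_zero[of ys] len by (simp add: Q_def)
      then have "poly ((pderiv^^k) Q) \<xi> = fact k * coeff Q k" by (rule pderiv_funpow_top)
      then show ?thesis using deg_list[of ys] len by (simp add: Q_def)
    qed
    ultimately have "E k \<xi> = D k \<xi> - l * fact k" by (simp add: E_def)
    moreover have "D k \<xi> \<ge> 0" using pos xi by simp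
    moreover have "l * fact k < 0" using lneg by (simp add: mult_neg_pos)
    ultimately show False using xi by simp
  qed
qed

lemma div_coeff:
  fixes q :: "real poly"
  assumes "P = lin v * q"
  shows "coeff q n = (\<Sum>m<N. v^m * coeff P (n+1+m)) + v^N * coeff q (n+N)"
proof (induction N)
  case 0 then show ?case by simp
next
  case (Suc N)
  have "coeff P (Suc (n+N)) = coeff q (n+N) - v * coeff q (Suc (n+N))"
    using assms by simp
  then have h: "coeff q (n+N) = coeff P (n+1+N) + v * coeff q (n + Suc N)" by simp
  have "coeff q n = (\<Sum>m<N. v^m * coeff P (n+1+m)) + v^N * (coeff P (n+1+N) + v * coeff q (n + Suc N))"
    using Suc.IH unfolding h .
  then show ?case by (simp add: algebra_simps)
qed

lemma newton:
  fixes x :: "nat \<Rightarrow> real" and k n :: nat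
  defines "P \<equiv> \<Prod>i\<in>{1..k}. lin (x i)"
  shows "of_nat (Suc n) * coeff P (Suc n) = (\<Sum>m<Suc k. coeff P (n+1+m) * (\<Sum>i\<in>{1..k}. x i ^ m))"
proof -
  have "of_nat (Suc n) * coeff P (Suc n) = coeff (pderiv P) n" by (simp add: coeff_pderiv)
  also have "pderiv P = (\<Sum>i\<in>{1..k}. (\<Prod>j\<in>{1..k}-{i}. lin (x j)))"
    unfolding P_def pderiv_prod by (simp add: pderiv_pCons)
  also have "coeff \<dots> n = (\<Sum>i\<in>{1..k}. coeff (\<Prod>j\<in>{1..k}-{i}. lin (x j)) n)" by (rule coeff_sum)
  also have "\<dots> = (\<Sum>i\<in>{1..k}. \<Sum>m<Suc k. x i ^ m * coeff P (n+1+m))"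
  proof (rule sum.cong[OF refl])
    fix i assume i: "i \<in> {1..k}"
    define q where "q = (\<Prod>j\<in>{1..k}-{i}. lin (x j))"
    have Pq: "P = lin (x i) * q" unfolding P_def q_def using i by (simp add: prod.remove)
    have "degree q = card ({1..k} - {i})" unfolding q_def
      by (subst degree_prod_eq_sum_degree) auto
    then have dq: "degree q < n + Suc k" using i by simp
    show "coeff q n = (\<Sum>m<Suc k. x i ^ m * coeff P (n+1+m))"
      using div_coeff[OF Pq, of n "Suc k"] coeff_eq_0[OF dq] by simp
  qed
  also have "\<dots> = (\<Sum>m<Suc k. coeff P (n+1+m) * (\<Sum>i\<in>{1..k}. x i ^ m))"
    by (subst sum.swap) (simp add: sum_distrib_left mult.commute)
  finally show ?thesis .
qed

lemma P_monic:
  fixes x :: "nat \<Rightarrow> real"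
  shows "degree (\<Prod>i\<in>{1..k}. lin (x i)) = k \<and> coeff (\<Prod>i\<in>{1..k}. lin (x i)) k = 1"
proof -
  have d: "degree (\<Prod>i\<in>{1..k}. lin (x i)) = k" by (subst degree_prod_eq_sum_degree) auto
  moreover have "lead_coeff (\<Prod>i\<in>{1..k}. lin (x i)) = 1" by (simp add: lead_coeff_prod)
  ultimately show ?thesis by simp
qed



lemma coeff_eq:
  fixes cP cQ pX pY :: "nat \<Rightarrow> real" and k :: nat
  assumes nP: "\<forall>n. of_nat (Suc n) * cP (Suc n) = (\<Sum>m<Suc k. cP (n+1+m) * pX m)"
    and nQ: "\<forall>n. of_nat (Suc n) * cQ (Suc n) = (\<Sum>m<Suc k. cQ (n+1+m) * pY m)"
    and zP: "\<forall>j>k. cP j = 0" and zQ: "\<forall>j>k. cQ j = 0" and kP: "cP k = 1" and kQ: "cQ k = 1"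
    and p0: "pX 0 = of_nat k" "pY 0 = of_nat k"
    and pe: "\<forall>m. 1 \<le> m \<and> m < k \<longrightarrow> pX m = pY m"
  shows "j \<ge> 1 \<Longrightarrow> cP j = cQ j"
proof (induction "k - j" arbitrary: j rule: less_induct)
  case less
  show ?case
  proof (cases "j \<ge> k")
    case True
    show ?thesis
    proof (cases "j = k")
      case True then show ?thesis using kP kQ by simp
    next
      case False then show ?thesis using zP zQ \<open>j \<ge> k\<close> by simp
    qed
  next
    case False
    then have jk: "j < k" by simp
    obtain n where j: "j = Suc n" using less.prems by (cases j) auto
    have IH: "cP j' = cQ j'" if "j < j'" for j'
    proof (cases "j' \<le> k")
      case True
      then have "k - j' < k - j" using that jk by simp
      then show ?thesis using less.hyps[of j'] that less.prems by simp
    next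
      case False then show ?thesis using zP zQ by simp
    qed
    have sums: "(\<Sum>m<k. cP (j + Suc m) * pX (Suc m)) = (\<Sum>m<k. cQ (j + Suc m) * pY (Suc m))"
    proof (rule sum.cong[OF refl])
      fix m assume "m \<in> {..<k}"
      show "cP (j + Suc m) * pX (Suc m) = cQ (j + Suc m) * pY (Suc m)"
      proof (cases "j + Suc m > k")
        case True then show ?thesis using zP zQ by simp
      next
        case False
        then have "Suc m < k" using less.prems by simp
        then have "pX (Suc m) = pY (Suc m)" using pe by simp
        moreover have "cP (j + Suc m) = cQ (j + Suc m)" by (rule IH) simp
        ultimately show ?thesis by simp
      qed
    qed
    have eP: "of_nat j * cP j = cP j * of_nat k + (\<Sum>m<k. cP (j + Suc m) * pX (Suc m))"
    proof -
      have "(\<Sum>m<Suc k. cP (n+1+m) * pX m) = cP (n+1+0) * pX 0 + (\<Sum>m<k. cP (n+1+Suc m) * pX (Suc m))"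
        by (rule sum.lessThan_Suc_shift)
      then show ?thesis using nP[rule_format, of n] j p0 by simp
    qed
    have eQ: "of_nat j * cQ j = cQ j * of_nat k + (\<Sum>m<k. cQ (j + Suc m) * pY (Suc m))"
    proof -
      have "(\<Sum>m<Suc k. cQ (n+1+m) * pY m) = cQ (n+1+0) * pY 0 + (\<Sum>m<k. cQ (n+1+Suc m) * pY (Suc m))"
        by (rule sum.lessThan_Suc_shift)
      then show ?thesis using nQ[rule_format, of n] j p0 by simp
    qed
    have "(of_nat j - of_nat k) * (cP j - cQ j) = (0::real)"
      using eP eQ sums by (simp add: algebra_simps)
    moreover have "(of_nat j - of_nat k :: real) \<noteq> 0" using jk by simp
    ultimately show ?thesis by simp
  qed
qed

lemma poly_sum_lt:
  fixes R :: "real poly"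
  assumes "\<forall>j\<ge>n. coeff R j = 0"
  shows "poly R t = (\<Sum>j<n. coeff R j * t^j)"
proof (cases "n = 0")
  case True
  then have "R = 0" using assms by (intro poly_eqI) simp
  then show ?thesis using True by simp
next
  case False
  have "degree R \<le> n - 1" using assms False by (intro degree_le) simp
  then have sub: "{..degree R} \<subseteq> {..<n}" using False by auto
  have "poly R t = (\<Sum>j\<le>degree R. coeff R j * t^j)" by (rule poly_altdef)
  also have "\<dots> = (\<Sum>j<n. coeff R j * t^j)"
    by (rule sum.mono_neutral_left) (use sub in \<open>auto simp: coeff_eq_0\<close>)
  finally show ?thesis .
qed

lemma Lpoly:
  fixes x y :: "nat \<Rightarrow> real" and R :: "real poly"
  assumes cR: "\<forall>j\<ge>k. coeff R j = 0"
    and pe: "\<forall>j. 1 \<le> j \<and> j < k \<longrightarrow> (\<Sum>i=1..k. x i ^ j) = (\<Sum>i=1..k. y i ^ j)"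
  shows "(\<Sum>i=1..k. poly R (x i)) = (\<Sum>i=1..k. poly R (y i))"
proof -
  have "(\<Sum>i=1..k. poly R (x i)) = (\<Sum>i=1..k. \<Sum>j<k. coeff R j * x i ^ j)"
    using poly_sum_lt[OF cR] by simp
  also have "\<dots> = (\<Sum>j<k. coeff R j * (\<Sum>i=1..k. x i ^ j))"
    by (subst sum.swap) (simp add: sum_distrib_left)
  also have "\<dots> = (\<Sum>j<k. coeff R j * (\<Sum>i=1..k. y i ^ j))"
  proof (rule sum.cong[OF refl])
    fix j assume "j \<in> {..<k}"
    then show "coeff R j * (\<Sum>i=1..k. x i ^ j) = coeff R j * (\<Sum>i=1..k. y i ^ j)"
      using pe by (cases "j = 0") auto
  qed
  also have "\<dots> = (\<Sum>i=1..k. \<Sum>j<k. coeff R j * y i ^ j)"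
    by (subst sum.swap) (simp add: sum_distrib_left)
  also have "\<dots> = (\<Sum>i=1..k. poly R (y i))"
    using poly_sum_lt[OF cR] by simp
  finally show ?thesis .
qed



theorem mainTheorem6:
  fixes k :: nat and a b :: real and x y :: "nat \<Rightarrow> real"
  assumes "k \<ge> 1"
    and "\<forall>i\<in>{1..k}. x i \<in> {a..b}"
    and "\<forall>i\<in>{1..k}. y i \<in> {a..b}"
    and "\<forall>j. 1 \<le> j \<and> j < k \<longrightarrow> (\<Sum>i=1..k. x i ^ j) = (\<Sum>i=1..k. y i ^ j)"
  shows "((\<Sum>i=1..k. x i ^ k) \<ge> (\<Sum>i=1..k. y i ^ k) \<longleftrightarrow> Max (x ` {1..k}) \<ge> Max (y ` {1..k}))
       \<and> (Max (x ` {1..k}) \<ge> Max (y ` {1..k}) \<longleftrightarrow>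
           (\<forall>f. kdiff_nonneg_on k a b f \<longrightarrow> (\<Sum>i=1..k. f (x i)) \<ge> (\<Sum>i=1..k. f (y i))))"
proof -
  note k1 = assms(1) and xab = assms(2) and yab = assms(3) and pe = assms(4)
  define P where "P = (\<Prod>i\<in>{1..k}. lin (x i))"
  define Q where "Q = (\<Prod>i\<in>{1..k}. lin (y i))"
  have mP: "degree P = k" "coeff P k = 1" using P_monic[where k=k and x=x] by (simp_all add: P_def)
  have mQ: "degree Q = k" "coeff Q k = 1" using P_monic[where k=k and x=y] by (simp_all add: Q_def)
  have cEq: "coeff P j = coeff Q j" if "j \<ge> 1" for j
  proof (rule coeff_eq[where k = k and pX = "\<lambda>m. \<Sum>i=1..k. x i ^ m" and pY = "\<lambda>m. \<Sum>i=1..k. y i ^ m"])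
    show "\<forall>n. of_nat (Suc n) * coeff P (Suc n) = (\<Sum>m<Suc k. coeff P (n+1+m) * (\<Sum>i=1..k. x i ^ m))"
      unfolding P_def using newton by blast
    show "\<forall>n. of_nat (Suc n) * coeff Q (Suc n) = (\<Sum>m<Suc k. coeff Q (n+1+m) * (\<Sum>i=1..k. y i ^ m))"
      unfolding Q_def using newton by blast
    show "\<forall>j>k. coeff P j = 0" using mP by (simp add: coeff_eq_0)
    show "\<forall>j>k. coeff Q j = 0" using mQ by (simp add: coeff_eq_0)
  qed (use mP mQ pe that in simp_all)
  have diff: "poly P t - poly Q t = coeff P 0 - coeff Q 0" for t
  proof -
    have "\<forall>j\<ge>1. coeff (P - Q) j = 0" using cEq by simp
    then have "poly (P - Q) t = (\<Sum>j<1. coeff (P - Q) j * t^j)" by (rule poly_sum_lt)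
    then show ?thesis by simp
  qed
  define d where "d = coeff Q 0 - coeff P 0"
  have Px: "poly P (x i) = 0" if "i \<in> {1..k}" for i
    unfolding P_def poly_prod using that by (intro prod_zero) auto
  have Qy: "poly Q (y i) = 0" if "i \<in> {1..k}" for i
    unfolding Q_def poly_prod using that by (intro prod_zero) auto
  have Qx: "poly Q (x i) = d" if "i \<in> {1..k}" for i
    using diff[of "x i"] Px[OF that] by (simp add: d_def)
  have Py: "poly P (y i) = - d" if "i \<in> {1..k}" for i
    using diff[of "y i"] Qy[OF that] by (simp add: d_def)
  have Delta: "(\<Sum>i=1..k. x i ^ k) - (\<Sum>i=1..k. y i ^ k) = of_nat k * d"
  proof -
    define R where "R = Q - monom 1 k"
    have cR: "\<forall>j\<ge>k. coeff R j = 0"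
      using mQ by (auto simp: R_def coeff_eq_0 coeff_monom)
    have L: "(\<Sum>i=1..k. poly R (x i)) = (\<Sum>i=1..k. poly R (y i))" by (rule Lpoly[OF cR pe])
    have "(\<Sum>i=1..k. poly R (x i)) = (\<Sum>i=1..k. d - x i ^ k)"
      using Qx by (simp add: R_def poly_monom)
    also have "\<dots> = of_nat k * d - (\<Sum>i=1..k. x i ^ k)" by (simp add: sum_subtractf)
    finally have 1: "(\<Sum>i=1..k. poly R (x i)) = of_nat k * d - (\<Sum>i=1..k. x i ^ k)" .
    have "(\<Sum>i=1..k. poly R (y i)) = (\<Sum>i=1..k. -(y i ^ k))"
      using Qy by (simp add: R_def poly_monom)
    also have "\<dots> = - (\<Sum>i=1..k. y i ^ k)" by (simp add: sum_negf)
    finally show ?thesis using 1 L by simp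
  qed
  have A_iff: "(\<Sum>i=1..k. x i ^ k) \<ge> (\<Sum>i=1..k. y i ^ k) \<longleftrightarrow> d \<ge> 0"
  proof -
    have "(\<Sum>i=1..k. x i ^ k) \<ge> (\<Sum>i=1..k. y i ^ k) \<longleftrightarrow> of_nat k * d \<ge> 0" using Delta by linarith
    also have "\<dots> \<longleftrightarrow> d \<ge> 0" using k1 by (simp add: zero_le_mult_iff)
    finally show ?thesis .
  qed
  have finx: "finite (x ` {1..k})" "x ` {1..k} \<noteq> {}" using k1 by auto
  have finy: "finite (y ` {1..k})" "y ` {1..k} \<noteq> {}" using k1 by auto
  define Mx where "Mx = Max (x ` {1..k})"
  define My where "My = Max (y ` {1..k})"
  have xle: "x i \<le> Mx" if "i \<in> {1..k}" for i unfolding Mx_def using finx that by simp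
  have yle: "y i \<le> My" if "i \<in> {1..k}" for i unfolding My_def using finy that by simp
  obtain i0 where i0: "i0 \<in> {1..k}" "x i0 = Mx"
    using Max_in[OF finx] unfolding Mx_def by auto
  have B1: "My \<le> Mx" if "d \<ge> 0"
  proof -
    have "y j \<le> Mx" if j: "j \<in> {1..k}" for j
    proof (rule ccontr)
      assume "\<not> y j \<le> Mx"
      then have "poly P (y j) > 0"
        unfolding P_def poly_prod using xle by (intro prod_pos) force
      then show False using Py[OF j] \<open>d \<ge> 0\<close> by simp
    qed
    then show ?thesis unfolding My_def using finy by simp
  qed
  have B2: "\<not> My \<le> Mx" if "d < 0"
  proof
    assume "My \<le> Mx"
    then have "poly Q Mx \<ge> 0"
      unfolding Q_def poly_prod using yle by (intro prod_nonneg) force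
    then show False using Qx[OF i0(1)] i0(2) \<open>d < 0\<close> by simp
  qed
  have B_iff: "My \<le> Mx \<longleftrightarrow> d \<ge> 0" using B1 B2 by force
  have C1: "(\<Sum>i=1..k. f (x i)) \<ge> (\<Sum>i=1..k. f (y i))" if d0: "d \<ge> 0" and kd: "kdiff_nonneg_on k a b f" for f
  proof -
    obtain D where D0: "D 0 = f" and ch: "chain D k a b" and pos: "\<forall>t\<in>{a..b}. D k t \<ge> 0"
      using kd unfolding kdiff_nonneg_on_def chain_def by blast
    define ys where "ys = map y [1..<Suc k]"
    have len: "length ys = k" by (simp add: ys_def)
    have setys: "set ys = y ` {1..k}" by (auto simp: ys_def)
    have ysab: "set ys \<subseteq> {a..b}" using yab setys by auto
    obtain p where ip: "interp D ys p" and cp0: "\<forall>j\<ge>length ys. coeff p j = 0"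
      using hermite_exists by blast
    have cp: "\<forall>j\<ge>k. coeff p j = 0" using cp0 len by simp
    have Qlist: "Q = prod_list (map lin ys)"
    proof -
      have "{1..k} = set [1..<Suc k]" by auto
      then have "Q = prod_list (map (\<lambda>i. lin (y i)) [1..<Suc k])"
        unfolding Q_def by (simp only: prod.distinct_set_conv_list[OF distinct_upt])
      then show ?thesis by (simp only: ys_def map_map comp_def)
    qed
    have hx: "D 0 (x i) - poly p (x i) \<ge> 0" if "i \<in> {1..k}" for i
      using key_nonneg[OF ch pos len ysab ip cp] xab that Qx[OF that] \<open>d \<ge> 0\<close> Qlist by simp
    have hy: "poly p (y i) = D 0 (y i)" if "i \<in> {1..k}" for i
    proof -
      have "y i \<in> set ys" using setys that by simp
      then have "0 < count_list ys (y i)" using count_list_0_iff[of ys "y i"] by simp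
      then have "poly ((pderiv^^0) p) (y i) = D 0 (y i)" using ip unfolding interp_def by blast
      then show ?thesis by simp
    qed
    have Lp: "(\<Sum>i=1..k. poly p (x i)) = (\<Sum>i=1..k. poly p (y i))" by (rule Lpoly[OF cp pe])
    have "(\<Sum>i=1..k. f (y i)) = (\<Sum>i=1..k. poly p (y i))" using hy D0 by simp
    also have "\<dots> = (\<Sum>i=1..k. poly p (x i))" using Lp by simp
    also have "\<dots> \<le> (\<Sum>i=1..k. poly p (x i)) + (\<Sum>i=1..k. D 0 (x i) - poly p (x i))"
    proof -
      have "0 \<le> (\<Sum>i=1..k. D 0 (x i) - poly p (x i))" by (rule sum_nonneg) (use hx in blast)
      then show ?thesis by simp
    qed
    also have "\<dots> = (\<Sum>i=1..k. f (x i))" using D0 by (simp add: sum_subtractf)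
    finally show ?thesis .
  qed
  have C2: "(\<Sum>i=1..k. x i ^ k) \<ge> (\<Sum>i=1..k. y i ^ k)"
    if "\<forall>f. kdiff_nonneg_on k a b f \<longrightarrow> (\<Sum>i=1..k. f (x i)) \<ge> (\<Sum>i=1..k. f (y i))"
  proof -
    have "kdiff_nonneg_on k a b (\<lambda>t. t ^ k)"
      unfolding kdiff_nonneg_on_def
    proof (intro exI conjI)
      show "(\<lambda>m t. poly ((pderiv^^m) (monom 1 k)) t) 0 = (\<lambda>t. t ^ k)" by (simp add: poly_monom)
      show "\<forall>m<k. \<forall>t\<in>{a..b}. ((\<lambda>m t. poly ((pderiv^^m) (monom 1 k)) t) m has_real_derivative
          (\<lambda>m t. poly ((pderiv^^m) (monom 1 k)) t) (Suc m) t) (at t within {a..b})"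
        using poly_chain[of "monom 1 k" k a b] unfolding chain_def by simp
      show "\<forall>t\<in>{a..b}. 0 \<le> (\<lambda>m t. poly ((pderiv^^m) (monom (1::real) k)) t) k t"
      proof
        fix t :: real
        have "\<forall>j>k. coeff (monom (1::real) k) j = 0" by (simp add: coeff_monom)
        then have "poly ((pderiv^^k) (monom (1::real) k)) t = fact k * coeff (monom 1 k) k"
          by (rule pderiv_funpow_top)
        then show "0 \<le> (\<lambda>m t. poly ((pderiv^^m) (monom (1::real) k)) t) k t" by simp
      qed
    qed
    then show ?thesis using that[rule_format, of "\<lambda>t. t ^ k"] by blast
  qed
  show ?thesis
    unfolding Mx_def[symmetric] My_def[symmetric]
    using A_iff B_iff C1 C2 by blast
qed


end
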